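(* Let $n\ge3$ and let $L^B$ be a blow-up of $L\cong\mathbf{2}^n$. Let $x,y$ be vertices of $G(L^B)$ with $[x]\neq[y]$. If $x$ and $y$ are comparable, or if $x\wedge y=0$, then $x$ and $y$ are not mutually maximally distant in $G(L^B)$.
   Context: Blow-up: for the Boolean lattice $L\cong\mathbf{2}^n$ with atoms $q_1,\dots,q_n$, replace each $a\in L\setminus\{0,1\}$ by a finite chain $C_a$: $a=a^1\lessdot\cdots\lessdot a^{k_a}$ ($k_a\ge 1$), keep $0,1$; elements of one chain are ordered along it, and for $u\in C_a,v\in C_b$ with $a\ne b$ ($C_0=\{0\},C_1=\{1\}$), $u\le v$ iff $a<b$ in $L$. $G(L^B)$ is the zero-divisor graph: vertices are nonzero $a\in L^B$ having some nonzero $b$ with $a\wedge b=0$, distinct vertices adjacent iff their meet is $0$. $[x]$ denotes the class of $x$ under $x\sim y\iff x^\perp=y^\perp$, where $x^\perp=\{z: x\wedge z=0\}$. In a graph, $u$ is maximally distant from $v$ if $d(v,w)\le d(u,v)$ for every neighbour $w$ of $u$; $u,v$ are mutually maximally distant if each is maximally distant from the other. *)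

theory Defs
  imports Main "HOL-Library.Extended_Nat"
begin

text \<open>The Boolean lattice 2^n is modelled as the subsets of {..<n} (atoms {i}).
  An element of the blow-up is a pair (a, i): the i-th element (1-based) of the chain C_a.\<close>

type_synonym bu = "nat set \<times> nat"

definition blowup :: "nat \<Rightarrow> (nat set \<Rightarrow> nat) \<Rightarrow> bu set" where
  "blowup n k = {(a, i). a \<subseteq> {..<n} \<and>
      (if a = {} \<or> a = {..<n} then i = 1 else 1 \<le> i \<and> i \<le> k a)}"

definition bu_le :: "bu \<Rightarrow> bu \<Rightarrow> bool" where
  "bu_le u v \<longleftrightarrow> (fst u = fst v \<and> snd u \<le> snd v) \<or> fst u \<subset> fst v"

definition bu_zero :: bu where
  "bu_zero = ({}, 1)"

definition meet_zero :: "nat \<Rightarrow> (nat set \<Rightarrow> nat) \<Rightarrow> bu \<Rightarrow> bu \<Rightarrow> bool" where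
  "meet_zero n k x y \<longleftrightarrow>
     (\<forall>z \<in> blowup n k. bu_le z x \<and> bu_le z y \<longrightarrow> z = bu_zero)"

definition perp :: "nat \<Rightarrow> (nat set \<Rightarrow> nat) \<Rightarrow> bu \<Rightarrow> bu set" where
  "perp n k x = {z \<in> blowup n k. meet_zero n k x z}"

definition zd_vertices :: "nat \<Rightarrow> (nat set \<Rightarrow> nat) \<Rightarrow> bu set" where
  "zd_vertices n k = {x \<in> blowup n k. x \<noteq> bu_zero \<and>
      (\<exists>y \<in> blowup n k. y \<noteq> bu_zero \<and> meet_zero n k x y)}"

definition zd_edges :: "nat \<Rightarrow> (nat set \<Rightarrow> nat) \<Rightarrow> (bu \<times> bu) set" where
  "zd_edges n k = {(x, y). x \<in> zd_vertices n k \<and> y \<in> zd_vertices n k \<and> x \<noteq> y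
      \<and> meet_zero n k x y}"

definition zd_dist :: "nat \<Rightarrow> (nat set \<Rightarrow> nat) \<Rightarrow> bu \<Rightarrow> bu \<Rightarrow> enat" where
  "zd_dist n k u v = Inf (enat ` {m. (u, v) \<in> (zd_edges n k) ^^ m})"

definition max_distant :: "nat \<Rightarrow> (nat set \<Rightarrow> nat) \<Rightarrow> bu \<Rightarrow> bu \<Rightarrow> bool" where
  "max_distant n k u v \<longleftrightarrow>
     (\<forall>w. (u, w) \<in> zd_edges n k \<longrightarrow> zd_dist n k v w \<le> zd_dist n k u v)"

definition mutually_max_distant :: "nat \<Rightarrow> (nat set \<Rightarrow> nat) \<Rightarrow> bu \<Rightarrow> bu \<Rightarrow> bool" where
  "mutually_max_distant n k u v \<longleftrightarrow> max_distant n k u v \<and> max_distant n k v u"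

end

theory Submission
  imports Defs
begin

lemma bl_snd: "u \<in> blowup n k \<Longrightarrow> snd u \<ge> 1 \<and> fst u \<subseteq> {..<n}"
  by (cases u) (auto simp: blowup_def split: if_splits)

lemma mz_iff:
  assumes K: "\<forall>a. a \<subseteq> {..<n} \<and> a \<noteq> {} \<and> a \<noteq> {..<n} \<longrightarrow> k a \<ge> 1"
    and u: "u \<in> blowup n k" and v: "v \<in> blowup n k"
  shows "meet_zero n k u v \<longleftrightarrow> fst u \<inter> fst v = {}"
proof
  assume mz: "meet_zero n k u v"
  show "fst u \<inter> fst v = {}"
  proof (rule ccontr)
    assume ne: "fst u \<inter> fst v \<noteq> {}"
    define c where "c = fst u \<inter> fst v"
    have cU: "c \<subseteq> {..<n}" using bl_snd[OF u] c_def by auto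
    have zb: "(c,1) \<in> blowup n k" using K cU ne c_def by (auto simp: blowup_def)
    have "bu_le (c,1) u" using bl_snd[OF u] c_def by (auto simp: bu_le_def)
    moreover have "bu_le (c,1) v" using bl_snd[OF v] c_def by (auto simp: bu_le_def)
    ultimately have "(c,1) = bu_zero" using mz zb by (auto simp: meet_zero_def)
    then show False using ne c_def by (simp add: bu_zero_def)
  qed
next
  assume d: "fst u \<inter> fst v = {}"
  show "meet_zero n k u v"
    unfolding meet_zero_def
  proof (intro ballI impI)
    fix z assume z: "z \<in> blowup n k" and le: "bu_le z u \<and> bu_le z v"
    have "fst z \<subseteq> fst u" "fst z \<subseteq> fst v" using le by (auto simp: bu_le_def)
    then have "fst z = {}" using d by auto
    then show "z = bu_zero" using z by (cases z) (auto simp: blowup_def bu_zero_def)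
  qed
qed

lemma vert:
  assumes K: "\<forall>a. a \<subseteq> {..<n} \<and> a \<noteq> {} \<and> a \<noteq> {..<n} \<longrightarrow> k a \<ge> 1"
    and u: "u \<in> zd_vertices n k"
  shows "u \<in> blowup n k \<and> fst u \<noteq> {} \<and> fst u \<noteq> {..<n} \<and> fst u \<subseteq> {..<n}"
proof -
  have ub: "u \<in> blowup n k" and nz: "u \<noteq> bu_zero" using u by (auto simp: zd_vertices_def)
  obtain y where y: "y \<in> blowup n k" "y \<noteq> bu_zero" "meet_zero n k u y"
    using u by (auto simp: zd_vertices_def)
  have ne: "fst u \<noteq> {}" using ub nz by (cases u) (auto simp: blowup_def bu_zero_def)
  have yne: "fst y \<noteq> {}" using y by (cases y) (auto simp: blowup_def bu_zero_def)
  have "fst u \<inter> fst y = {}" using mz_iff[OF K ub y(1)] y(3) by simp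
  moreover have "fst y \<subseteq> {..<n}" using bl_snd[OF y(1)] by simp
  ultimately have "fst u \<noteq> {..<n}" using yne by auto
  then show ?thesis using ub ne bl_snd[OF ub] by auto
qed

lemma dist_le: "(u,v) \<in> zd_edges n k ^^ m \<Longrightarrow> zd_dist n k u v \<le> enat m"
  unfolding zd_dist_def by (rule Inf_lower) auto

lemma dist_ge: "(\<And>j. j < m \<Longrightarrow> (u,v) \<notin> zd_edges n k ^^ j) \<Longrightarrow> enat m \<le> zd_dist n k u v"
  unfolding zd_dist_def by (auto intro!: Inf_greatest) (meson not_le)

lemma disj_case:
  assumes K: "\<forall>a. a \<subseteq> {..<n} \<and> a \<noteq> {} \<and> a \<noteq> {..<n} \<longrightarrow> k a \<ge> 1"
    and u: "u \<in> zd_vertices n k" and v: "v \<in> zd_vertices n k"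
    and mz: "meet_zero n k u v"
    and c: "c \<subseteq> {..<n} - fst u" "c \<inter> fst v \<noteq> {}" "c \<noteq> fst v"
  shows "\<not> max_distant n k u v"
proof -
  note U = vert[OF K u] and V = vert[OF K v]
  have cne: "c \<noteq> {}" using c by auto
  have cp: "c \<noteq> {..<n}" using c U by auto
  have wb: "(c,1) \<in> blowup n k" using K c cne cp by (auto simp: blowup_def)
  have wnz: "(c,1) \<noteq> bu_zero" using cne by (simp add: bu_zero_def)
  have wu: "meet_zero n k (c,1) u" using mz_iff[OF K wb] U c by auto
  have unz: "u \<noteq> bu_zero" using U by (auto simp: bu_zero_def)
  have wv: "(c,1) \<in> zd_vertices n k" unfolding zd_vertices_def
    using wb wnz wu unz U by blast
  have ne_wu: "u \<noteq> (c,1)" using c U by auto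
  have muc: "meet_zero n k u (c,1)" using mz_iff[OF K _ wb, of u] U c by auto
  have edge: "(u,(c,1)) \<in> zd_edges n k" using u wv ne_wu muc
    unfolding zd_edges_def by blast
  have d1: "zd_dist n k u v \<le> enat 1"
  proof (rule dist_le)
    have "u \<noteq> v" using mz_iff[OF K] U V mz by auto
    then show "(u, v) \<in> zd_edges n k ^^ 1" using u v mz by (simp add: zd_edges_def)
  qed
  have d2: "enat 2 \<le> zd_dist n k v (c,1)"
  proof (rule dist_ge)
    fix j :: nat assume "j < 2"
    then have "j = 0 \<or> j = 1" by auto
    moreover have "v \<noteq> (c,1)" using c by auto
    moreover have "\<not> meet_zero n k v (c,1)" using mz_iff[OF K _ wb] V c by auto
    ultimately show "(v,(c,1)) \<notin> zd_edges n k ^^ j" by (auto simp: zd_edges_def)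
  qed
  have "\<not> zd_dist n k v (c,1) \<le> zd_dist n k u v"
  proof
    assume "zd_dist n k v (c,1) \<le> zd_dist n k u v"
    then have "enat 2 \<le> enat 1" using d1 d2 by (meson order_trans)
    then show False by simp
  qed
  then show ?thesis using edge unfolding max_distant_def by blast
qed

lemma comp_case:
  assumes K: "\<forall>a. a \<subseteq> {..<n} \<and> a \<noteq> {} \<and> a \<noteq> {..<n} \<longrightarrow> k a \<ge> 1"
    and u: "u \<in> zd_vertices n k" and v: "v \<in> zd_vertices n k"
    and le: "bu_le u v" and ne: "fst u \<noteq> fst v"
  shows "\<not> max_distant n k u v"
proof -
  note U = vert[OF K u] and V = vert[OF K v]
  have sub: "fst u \<subset> fst v" using le ne by (auto simp: bu_le_def)
  define c where "c = {..<n} - fst u"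
  define e where "e = {..<n} - fst v"
  have cne: "c \<noteq> {}" "c \<noteq> {..<n}" "c \<subseteq> {..<n}" using U c_def by auto
  have ene: "e \<noteq> {}" "e \<noteq> {..<n}" "e \<subseteq> {..<n}" using V e_def by auto
  have wb: "(c,1) \<in> blowup n k" using K cne by (auto simp: blowup_def)
  have eb: "(e,1) \<in> blowup n k" using K ene by (auto simp: blowup_def)
  have unz: "u \<noteq> bu_zero" using U by (auto simp: bu_zero_def)
  have vnz: "v \<noteq> bu_zero" using V by (auto simp: bu_zero_def)
  have muc: "meet_zero n k u (c,1)" using mz_iff[OF K _ wb, of u] U c_def by auto
  have mue: "meet_zero n k u (e,1)" using mz_iff[OF K _ eb, of u] U e_def sub by auto
  have mev: "meet_zero n k (e,1) v" using mz_iff[OF K eb, of v] V e_def by auto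
  have mcu: "meet_zero n k (c,1) u" using mz_iff[OF K wb, of u] U c_def by auto
  have wv: "(c,1) \<in> zd_vertices n k" unfolding zd_vertices_def
    using wb cne mcu unz U by (auto simp: bu_zero_def)
  have ev: "(e,1) \<in> zd_vertices n k" unfolding zd_vertices_def
    using eb ene mev vnz V by (auto simp: bu_zero_def)
  have n1: "u \<noteq> (c,1)" using U c_def by (cases u) auto
  have n2: "u \<noteq> (e,1)" using U e_def sub by (cases u) auto
  have n3: "(e,1) \<noteq> v" using V e_def by (cases v) auto
  have edge: "(u,(c,1)) \<in> zd_edges n k" using u wv muc n1
    unfolding zd_edges_def by blast
  have e1: "(u,(e,1)) \<in> zd_edges n k" using u ev mue n2
    unfolding zd_edges_def by blast
  have e2: "((e,1),v) \<in> zd_edges n k" using v ev mev n3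
    unfolding zd_edges_def by blast
  have d1: "zd_dist n k u v \<le> enat 2"
    by (rule dist_le) (use e1 e2 in \<open>auto simp: numeral_2_eq_2 relpow_1 intro: relcompI\<close>)
  have d2: "enat 3 \<le> zd_dist n k v (c,1)"
  proof (rule dist_ge)
    fix j :: nat assume "j < 3"
    then have "j = 0 \<or> j = 1 \<or> j = 2" by auto
    moreover have "v \<noteq> (c,1)" using sub c_def U by auto
    moreover have "\<not> meet_zero n k v (c,1)" using mz_iff[OF K _ wb] V sub c_def by auto
    moreover have "(v,(c,1)) \<notin> zd_edges n k O zd_edges n k"
    proof
      assume "(v,(c,1)) \<in> zd_edges n k O zd_edges n k"
      then obtain z where z1: "(v,z) \<in> zd_edges n k" and z2: "(z,(c,1)) \<in> zd_edges n k" by blast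
      have zv: "z \<in> zd_vertices n k" using z1 by (auto simp: zd_edges_def)
      note Z = vert[OF K zv]
      have "fst v \<inter> fst z = {}" using z1 mz_iff[OF K] V Z by (auto simp: zd_edges_def)
      moreover have "fst z \<inter> c = {}" using z2 mz_iff[OF K] Z wb by (auto simp: zd_edges_def)
      ultimately show False using Z sub c_def by auto
    qed
    ultimately show "(v,(c,1)) \<notin> zd_edges n k ^^ j"
      by (auto simp: zd_edges_def numeral_2_eq_2)
  qed
  have "\<not> zd_dist n k v (c,1) \<le> zd_dist n k u v"
  proof
    assume "zd_dist n k v (c,1) \<le> zd_dist n k u v"
    then have "enat 3 \<le> enat 2" using d1 d2 by (meson order_trans)
    then show False by simp
  qed
  then show ?thesis using edge unfolding max_distant_def by blast
qed

theorem mainTheorem5: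
  fixes n :: nat and k :: "nat set \<Rightarrow> nat" and x y :: bu
  assumes "n \<ge> 3"
    and "\<forall>a. a \<subseteq> {..<n} \<and> a \<noteq> {} \<and> a \<noteq> {..<n} \<longrightarrow> k a \<ge> 1"
    and "x \<in> zd_vertices n k" and "y \<in> zd_vertices n k"
    and "perp n k x \<noteq> perp n k y"
    and "bu_le x y \<or> bu_le y x \<or> meet_zero n k x y"
  shows "\<not> mutually_max_distant n k x y"
proof -
  note K = assms(2)
  note X = vert[OF K assms(3)] and Y = vert[OF K assms(4)]
  have fne: "fst x \<noteq> fst y"
  proof
    assume eq: "fst x = fst y"
    have "\<And>z. z \<in> blowup n k \<Longrightarrow> meet_zero n k x z = meet_zero n k y z"
    proof -
      fix z assume z: "z \<in> blowup n k"
      show "meet_zero n k x z = meet_zero n k y z"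
        using mz_iff[OF K _ z, of x] mz_iff[OF K _ z, of y] X Y eq by simp
    qed
    then have "perp n k x = perp n k y"
      unfolding perp_def by blast
    then show False using assms(5) by simp
  qed
  have mzs: "meet_zero n k x y \<Longrightarrow> meet_zero n k y x"
    unfolding meet_zero_def by blast
  have "\<not> max_distant n k x y \<or> \<not> max_distant n k y x"
  proof -
    { assume "bu_le x y" then have ?thesis using comp_case[OF K assms(3,4) _ fne] by blast }
    moreover
    { assume "bu_le y x" then have ?thesis using comp_case[OF K assms(4,3)] fne by metis }
    moreover
    { assume mz: "meet_zero n k x y"
      have dj: "fst x \<inter> fst y = {}" using mz_iff[OF K] X Y mz by blast
      have ?thesis
      proof (cases "\<exists>e. fst y = {e}")
        case False
        then obtain e where e: "e \<in> fst y" "fst y \<noteq> {e}" using Y by blast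
        have "\<not> max_distant n k x y"
          by (rule disj_case[OF K assms(3,4) mz, of "{e}"]) (use e dj Y in auto)
        then show ?thesis by blast
      next
        case True
        then obtain q where q: "fst y = {q}" by blast
        show ?thesis
        proof (cases "\<exists>e. fst x = {e}")
          case False
          then obtain e where e: "e \<in> fst x" "fst x \<noteq> {e}" using X by blast
          have "\<not> max_distant n k y x"
            by (rule disj_case[OF K assms(4,3) mzs[OF mz], of "{e}"]) (use e dj X in auto)
          then show ?thesis by blast
        next
          case True
          then obtain p where p: "fst x = {p}" by blast
          have pU: "p < n" using X p by auto
          have "card ({..<n} - {p}) = n - 1" using pU by (simp add: card_Diff_singleton)
          then have "card ({..<n} - fst x) \<noteq> card (fst y)" using p q assms(1) by simp
          then have neq: "{..<n} - fst x \<noteq> fst y" by metis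
          have "\<not> max_distant n k x y"
            by (rule disj_case[OF K assms(3,4) mz, of "{..<n} - fst x"]) (use neq dj Y q in auto)
          then show ?thesis by blast
        qed
      qed }
    ultimately show ?thesis using assms(6) by blast
  qed
  then show ?thesis unfolding mutually_max_distant_def by blast
qed

end
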